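(* The set $\mathbb F_0$ of origami numbers is a subfield of $\mathbb R$, and it is closed under the operation $\alpha\mapsto\sqrt{1+\alpha^2}$: if $\alpha\in\mathbb F_0$ then $\sqrt{1+\alpha^2}\in\mathbb F_0$.
   Context: An origami pair is a pair $(\mathcal P,\mathcal L)$ where $\mathcal P\subset\mathbb R^2$ is a set of points and $\mathcal L$ is a collection of lines in $\mathbb R^2$ such that: (i) the intersection point of any two non-parallel lines of $\mathcal L$ lies in $\mathcal P$; (ii) for any two distinct points of $\mathcal P$, the line through them is in $\mathcal L$; (iii) for any two distinct points of $\mathcal P$, the perpendicular bisector of the segment joining them is in $\mathcal L$; (iv) if $L_1,L_2\in\mathcal L$, then every line equidistant from $L_1$ and $L_2$ is in $\mathcal L$ (the midline if they are parallel, the angle bisectors if they intersect); (v) if $L_1,L_2\in\mathcal L$, then the mirror reflection of $L_2$ across $L_1$ is in $\mathcal L$. A set $\mathcal P\subset\mathbb R^2$ is closed under origami constructions if there is a collection of lines $\mathcal L$ with $(\mathcal P,\mathcal L)$ an origami pair. The set of origami constructible points is $\mathcal P_0=\bigcap\{\mathcal P : (0,0),(0,1)\in\mathcal P \text{ and } \mathcal P \text{ is closed under origami constructions}\}$. The set of origami numbers is $\mathbb F_0=\{\alpha\in\mathbb R : \exists v_1,v_2\in\mathcal P_0,\ |\alpha|=\operatorname{dist}(v_1,v_2)\}$. *)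

theory Defs
  imports "HOL-Analysis.Analysis"
begin

type_synonym point = "real \<times> real"

definition line_eq :: "real \<Rightarrow> real \<Rightarrow> real \<Rightarrow> point set" where
  "line_eq a b c = {(x, y). a * x + b * y = c}"

definition is_line :: "point set \<Rightarrow> bool" where
  "is_line L \<longleftrightarrow> (\<exists>a b c. (a, b) \<noteq> (0, 0) \<and> L = line_eq a b c)"

definition line_through :: "point \<Rightarrow> point \<Rightarrow> point set" where
  "line_through p q = {((1 - t) * fst p + t * fst q, (1 - t) * snd p + t * snd q) | t. True}"

definition perp_bisector :: "point \<Rightarrow> point \<Rightarrow> point set" where
  "perp_bisector p q = {z. dist z p = dist z q}"

definition reflect_pt :: "real \<Rightarrow> real \<Rightarrow> real \<Rightarrow> point \<Rightarrow> point" where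
  "reflect_pt a b c z =
     (let t = (a * fst z + b * snd z - c) / (a\<^sup>2 + b\<^sup>2)
      in (fst z - 2 * a * t, snd z - 2 * b * t))"

text \<open>A line M equidistant from two distinct lines L1, L2: every point of M has the same
  distance to L1 and to L2 (midline if parallel, angle bisectors if intersecting).\<close>
definition equidistant_line :: "point set \<Rightarrow> point set \<Rightarrow> point set \<Rightarrow> bool" where
  "equidistant_line L1 L2 M \<longleftrightarrow> is_line M \<and> (\<forall>z\<in>M. infdist z L1 = infdist z L2)"

definition origami_pair :: "point set \<Rightarrow> point set set \<Rightarrow> bool" where
  "origami_pair P \<L> \<longleftrightarrow>
     (\<forall>L\<in>\<L>. is_line L) \<and>
     (\<forall>L1\<in>\<L>. \<forall>L2\<in>\<L>. \<forall>p. L1 \<noteq> L2 \<and> p \<in> L1 \<and> p \<in> L2 \<longrightarrow> p \<in> P) \<and>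
     (\<forall>p\<in>P. \<forall>q\<in>P. p \<noteq> q \<longrightarrow> line_through p q \<in> \<L>) \<and>
     (\<forall>p\<in>P. \<forall>q\<in>P. p \<noteq> q \<longrightarrow> perp_bisector p q \<in> \<L>) \<and>
     (\<forall>L1\<in>\<L>. \<forall>L2\<in>\<L>. \<forall>M. L1 \<noteq> L2 \<and> equidistant_line L1 L2 M \<longrightarrow> M \<in> \<L>) \<and>
     (\<forall>L1\<in>\<L>. \<forall>L2\<in>\<L>. \<forall>a b c. (a, b) \<noteq> (0, 0) \<and> L1 = line_eq a b c
         \<longrightarrow> reflect_pt a b c ` L2 \<in> \<L>)"

definition origami_closed :: "point set \<Rightarrow> bool" where
  "origami_closed P \<longleftrightarrow> (\<exists>\<L>. origami_pair P \<L>)"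

definition origami_points :: "point set" where
  "origami_points = \<Inter>{P. (0, 0) \<in> P \<and> (0, 1) \<in> P \<and> origami_closed P}"

definition origami_numbers :: "real set" where
  "origami_numbers = {\<alpha>. \<exists>v1\<in>origami_points. \<exists>v2\<in>origami_points. \<bar>\<alpha>\<bar> = dist v1 v2}"

definition real_subfield :: "real set \<Rightarrow> bool" where
  "real_subfield S \<longleftrightarrow> 0 \<in> S \<and> 1 \<in> S \<and>
     (\<forall>x\<in>S. \<forall>y\<in>S. x + y \<in> S \<and> x - y \<in> S \<and> x * y \<in> S) \<and>
     (\<forall>x\<in>S. x \<noteq> 0 \<longrightarrow> inverse x \<in> S)"

end

theory Submission
  imports Defs
begin


lemma dist_pt: "dist ((x::real),(y::real)) (u,v) = sqrt ((x-u)^2 + (y-v)^2)"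
  by (simp add: dist_Pair_Pair dist_real_def)

lemma cs_ineq:
  fixes a b p q :: real
  shows "\<bar>a*p + b*q\<bar> \<le> sqrt (a^2+b^2) * sqrt (p^2+q^2)"
proof -
  have "(a*p+b*q)^2 \<le> (a^2+b^2)*(p^2+q^2)"
  proof -
    have "(a*q - b*p)^2 \<ge> 0" by simp
    then show ?thesis by (simp add: power2_eq_square algebra_simps)
  qed
  then have "sqrt ((a*p+b*q)^2) \<le> sqrt ((a^2+b^2)*(p^2+q^2))"
    using real_sqrt_le_mono by blast
  then show ?thesis by (simp add: real_sqrt_mult)
qed

lemma infdist_line:
  assumes ab: "(a,b) \<noteq> (0::real,0::real)"
  shows "infdist (x,y) (line_eq a b c) = \<bar>a*x + b*y - c\<bar> / sqrt (a^2+b^2)"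
proof -
  define n where "n = sqrt (a^2+b^2)"
  have s: "a^2+b^2 > 0" using ab by (auto simp: sum_power2_gt_zero_iff)
  then have n: "n > 0" unfolding n_def by simp
  have nn: "n^2 = a^2+b^2" unfolding n_def using s by simp
  define t where "t = (a*x + b*y - c)/(a^2+b^2)"
  define f where "f = (x - a*t, y - b*t)"
  have s0: "a^2+b^2 \<noteq> 0" using s by linarith
  have tt: "(a^2+b^2)*t = a*x+b*y-c" unfolding t_def using s0 by simp
  have "a*(x - a*t) + b*(y - b*t) = a*x+b*y - (a^2+b^2)*t" by (simp add: power2_eq_square algebra_simps)
  then have fin: "f \<in> line_eq a b c"
    unfolding f_def line_eq_def using tt by simp
  have "dist (x,y) f = sqrt ((a^2+b^2) * t^2)"
    unfolding f_def dist_pt by (simp add: power2_eq_square algebra_simps)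
  also have "\<dots> = n * \<bar>t\<bar>" unfolding n_def by (simp add: real_sqrt_mult)
  also have "\<dots> = \<bar>a*x + b*y - c\<bar> / n"
  proof -
    have "\<bar>t\<bar> = \<bar>a*x + b*y - c\<bar> / n^2" unfolding t_def nn using s by (simp add: abs_divide)
    then show ?thesis using n by (simp add: power2_eq_square)
  qed
  finally have d: "dist (x,y) f = \<bar>a*x + b*y - c\<bar> / n" .
  have lb: "\<bar>a*x + b*y - c\<bar> / n \<le> dist (x,y) w" if wl: "w \<in> line_eq a b c" for w
  proof -
    obtain u v where w: "w = (u,v)" and uv: "a * u + b * v = c" using wl unfolding line_eq_def by auto
    have "\<bar>a*x + b*y - c\<bar> = \<bar>a*(x-u) + b*(y-v)\<bar>" using uv by (simp add: algebra_simps)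
    also have "\<dots> \<le> n * sqrt ((x-u)^2+(y-v)^2)" unfolding n_def by (rule cs_ineq)
    finally show ?thesis using n w by (simp add: dist_pt field_simps)
  qed
  have "infdist (x,y) (line_eq a b c) = \<bar>a*x + b*y - c\<bar> / n"
  proof (rule antisym)
    show "infdist (x,y) (line_eq a b c) \<le> \<bar>a*x + b*y - c\<bar> / n"
      using infdist_le[OF fin, of "(x,y)"] d by simp
    have ne: "line_eq a b c \<noteq> {}" using fin by auto
    show "\<bar>a*x + b*y - c\<bar> / n \<le> infdist (x,y) (line_eq a b c)"
      unfolding infdist_notempty[OF ne] by (rule cINF_greatest[OF ne lb])
  qed
  then show ?thesis unfolding n_def .
qed

lemma line_eq_scale: "k \<noteq> 0 \<Longrightarrow> line_eq (k*a) (k*b) (k*c) = line_eq a b c"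
proof -
  assume k: "k \<noteq> 0"
  have "k*a*x + k*b*y = k*c \<longleftrightarrow> a*x + b*y = c" for x y
  proof -
    have "k*a*x + k*b*y = k*(a*x+b*y)" by (simp add: algebra_simps)
    then show ?thesis using k by simp
  qed
  then show ?thesis unfolding line_eq_def by auto
qed

lemma line_through_eq:
  assumes pq: "p \<noteq> q" and ab: "(A,B) \<noteq> (0::real,0::real)"
    and d: "A*(fst q - fst p) + B*(snd q - snd p) = 0"
    and c: "A* fst p + B* snd p = C"
  shows "line_through p q = line_eq A B C"
proof
  show "line_through p q \<subseteq> line_eq A B C"
  proof
    fix z assume "z \<in> line_through p q"
    then obtain t where z: "z = ((1 - t) * fst p + t * fst q, (1 - t) * snd p + t * snd q)"
      unfolding line_through_def by auto
    have "A* fst z + B* snd z = (A* fst p + B* snd p) + t*(A*(fst q - fst p) + B*(snd q - snd p))"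
      unfolding z by (simp add: algebra_simps)
    then show "z \<in> line_eq A B C" using c d by (cases z) (simp add: line_eq_def)
  qed
  show "line_eq A B C \<subseteq> line_through p q"
  proof
    fix z assume zin: "z \<in> line_eq A B C"
    obtain x y where z: "z = (x,y)" by (cases z)
    define d1 where "d1 = fst q - fst p"
    define d2 where "d2 = snd q - snd p"
    define e1 where "e1 = x - fst p"
    define e2 where "e2 = y - snd p"
    have dd: "A*d1 + B*d2 = 0" using d unfolding d1_def d2_def .
    have ee: "A*e1 + B*e2 = 0" using zin c unfolding z e1_def e2_def line_eq_def by (auto simp: algebra_simps)
    have cross: "e1*d2 - e2*d1 = 0"
    proof (cases "A = 0")
      case True
      then have "B \<noteq> 0" using ab by auto
      then have "d2 = 0" "e2 = 0" using dd ee True by auto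
      then show ?thesis by simp
    next
      case False
      have "A*(e1*d2 - e2*d1) = (A*e1)*d2 - (A*d1)*e2" by (simp add: algebra_simps)
      also have "\<dots> = 0"
      proof -
        have "A*e1 = -(B*e2)" "A*d1 = -(B*d2)" using dd ee by linarith+
        then show ?thesis by simp
      qed
      finally show ?thesis using False by simp
    qed
    have nz: "d1^2 + d2^2 > 0" using pq unfolding d1_def d2_def
      by (cases p, cases q) (auto simp: sum_power2_gt_zero_iff)
    define t where "t = (e1*d1 + e2*d2)/(d1^2+d2^2)"
    have "e1 = t*d1"
    proof -
      have "e1*(d1^2+d2^2) = (e1*d1 + e2*d2)*d1" using cross
        by (simp add: power2_eq_square algebra_simps)
      then have eq: "(e1*d1 + e2*d2)*d1 = e1*(d1^2+d2^2)" by simp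
      have nz': "d1^2+d2^2 \<noteq> 0" using nz by linarith
      have "t*d1 = ((e1*d1+e2*d2)*d1)/(d1^2+d2^2)" unfolding t_def by simp
      also have "\<dots> = e1*(d1^2+d2^2)/(d1^2+d2^2)" using eq by simp
      also have "\<dots> = e1" using nz' by simp
      finally show ?thesis by simp
    qed
    moreover have "e2 = t*d2"
    proof -
      have "e2*(d1^2+d2^2) = (e1*d1 + e2*d2)*d2" using cross
        by (simp add: power2_eq_square algebra_simps)
      then have eq: "(e1*d1 + e2*d2)*d2 = e2*(d1^2+d2^2)" by simp
      have nz': "d1^2+d2^2 \<noteq> 0" using nz by linarith
      have "t*d2 = ((e1*d1+e2*d2)*d2)/(d1^2+d2^2)" unfolding t_def by simp
      also have "\<dots> = e2*(d1^2+d2^2)/(d1^2+d2^2)" using eq by simp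
      also have "\<dots> = e2" using nz' by simp
      finally show ?thesis by simp
    qed
    ultimately show "z \<in> line_through p q" unfolding line_through_def z
      by (auto simp: e1_def e2_def d1_def d2_def algebra_simps intro!: exI[of _ t])
  qed
qed

lemma perp_bisector_eq:
  "perp_bisector p q = line_eq (2*(fst q - fst p)) (2*(snd q - snd p))
      ((fst q)^2 + (snd q)^2 - (fst p)^2 - (snd p)^2)"
proof -
  have sq: "(dist (x,y) r)^2 = (x - fst r)^2 + (y - snd r)^2" for x y :: real and r
    by (cases r) (simp add: dist_pt)
  have "dist (x,y) p = dist (x,y) q \<longleftrightarrow> (dist (x,y) p)^2 = (dist (x,y) q)^2" for x y
    by (metis power2_eq_iff_nonneg zero_le_dist)
  also have "\<dots> x y \<longleftrightarrow> 2*(fst q - fst p)*x + 2*(snd q - snd p)*y = (fst q)^2 + (snd q)^2 - (fst p)^2 - (snd p)^2" for x y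
    unfolding sq by (simp add: power2_eq_square algebra_simps)
  finally show ?thesis unfolding perp_bisector_def line_eq_def by auto
qed

lemma reflect_invol:
  assumes "(a,b) \<noteq> (0::real,0::real)"
  shows "reflect_pt a b c (reflect_pt a b c z) = z"
proof -
  have s: "a^2+b^2 \<noteq> 0" using assms by (auto simp: sum_power2_eq_zero_iff)
  obtain x y where z: "z = (x,y)" by (cases z)
  define t where "t = (a*x + b*y - c)/(a^2+b^2)"
  have tt: "(a^2+b^2)*t = a*x+b*y-c" unfolding t_def using s by simp
  have r1: "reflect_pt a b c z = (x - 2*a*t, y - 2*b*t)" unfolding reflect_pt_def z t_def Let_def by simp
  have "(a*(x - 2*a*t) + b*(y - 2*b*t) - c) = (a*x+b*y-c) - 2*((a^2+b^2)*t)"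
    by (simp add: power2_eq_square algebra_simps)
  also have "\<dots> = - ((a^2+b^2)*t)" using tt by simp
  finally have "(a*(x - 2*a*t) + b*(y - 2*b*t) - c)/(a^2+b^2) = -t" using s by simp
  then show ?thesis unfolding r1 unfolding reflect_pt_def Let_def z by simp
qed




locale opair =
  fixes P :: "point set" and L :: "point set set"
  assumes pair: "origami_pair P L" and O: "(0,0) \<in> P" and E: "(0,1) \<in> P"
begin

lemma part1: "\<forall>L1\<in>L. \<forall>L2\<in>L. \<forall>p. L1 \<noteq> L2 \<and> p \<in> L1 \<and> p \<in> L2 \<longrightarrow> p \<in> P"
  using pair unfolding origami_pair_def by (elim conjE) assumption

lemma part2: "\<forall>p\<in>P. \<forall>q\<in>P. p \<noteq> q \<longrightarrow> line_through p q \<in> L"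
  using pair unfolding origami_pair_def by (elim conjE) assumption

lemma part3: "\<forall>p\<in>P. \<forall>q\<in>P. p \<noteq> q \<longrightarrow> perp_bisector p q \<in> L"
  using pair unfolding origami_pair_def by (elim conjE) assumption

lemma part4: "\<forall>L1\<in>L. \<forall>L2\<in>L. \<forall>M. L1 \<noteq> L2 \<and> equidistant_line L1 L2 M \<longrightarrow> M \<in> L"
  using pair unfolding origami_pair_def by (elim conjE) assumption

lemma part5: "\<forall>L1\<in>L. \<forall>L2\<in>L. \<forall>a b c. (a, b) \<noteq> (0, 0) \<and> L1 = line_eq a b c \<longrightarrow> reflect_pt a b c ` L2 \<in> L"
  using pair unfolding origami_pair_def by (elim conjE) assumption

lemma meet0: "L1 \<in> L \<Longrightarrow> L2 \<in> L \<Longrightarrow> L1 \<noteq> L2 \<Longrightarrow> p \<in> L1 \<Longrightarrow> p \<in> L2 \<Longrightarrow> p \<in> P"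
  using part1 by blast

lemma through: "p \<in> P \<Longrightarrow> q \<in> P \<Longrightarrow> p \<noteq> q \<Longrightarrow> line_through p q \<in> L"
  using part2 by blast

lemma pb: "p \<in> P \<Longrightarrow> q \<in> P \<Longrightarrow> p \<noteq> q \<Longrightarrow> perp_bisector p q \<in> L"
  using part3 by blast

lemma eqd: "L1 \<in> L \<Longrightarrow> L2 \<in> L \<Longrightarrow> L1 \<noteq> L2 \<Longrightarrow> equidistant_line L1 L2 M \<Longrightarrow> M \<in> L"
  using part4 by blast

lemma refl: "line_eq a b c \<in> L \<Longrightarrow> (a,b) \<noteq> (0,0) \<Longrightarrow> L2 \<in> L \<Longrightarrow> reflect_pt a b c ` L2 \<in> L"
  using part5 by blast

lemma LT:
  assumes "p \<in> P" "q \<in> P" "p \<noteq> q" "(A,B) \<noteq> (0,0)"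
    "A*(fst q - fst p) + B*(snd q - snd p) = 0" "A * fst p + B * snd p = C"
  shows "line_eq A B C \<in> L"
  using through[OF assms(1-3)] line_through_eq[OF assms(3-6)] by simp

lemma PB:
  assumes "p \<in> P" "q \<in> P" "p \<noteq> q" "A = 2*(fst q - fst p)" "B = 2*(snd q - snd p)"
    "C = (fst q)^2 + (snd q)^2 - (fst p)^2 - (snd p)^2"
  shows "line_eq A B C \<in> L"
  using pb[OF assms(1-3)] perp_bisector_eq[of p q] assms(4-6) by simp

lemma MEET:
  assumes l1: "line_eq a1 b1 c1 \<in> L" and l2: "line_eq a2 b2 c2 \<in> L" and d: "a1*b2 \<noteq> a2*b1"
    and e1: "a1*x + b1*y = c1" and e2: "a2*x + b2*y = c2"
  shows "(x,y) \<in> P"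
proof -
  have "(x + b1, y - a1) \<in> line_eq a1 b1 c1" using e1 unfolding line_eq_def by (simp add: algebra_simps)
  moreover have "(x + b1, y - a1) \<notin> line_eq a2 b2 c2"
  proof
    assume "(x + b1, y - a1) \<in> line_eq a2 b2 c2"
    then have "a2*(x+b1) + b2*(y-a1) = c2" unfolding line_eq_def by simp
    then have "a2*b1 - b2*a1 = 0" using e2 by (simp add: algebra_simps)
    then show False using d by (simp add: algebra_simps)
  qed
  ultimately have ne: "line_eq a1 b1 c1 \<noteq> line_eq a2 b2 c2" by blast
  show ?thesis
    by (rule meet0[OF l1 l2 ne]) (use e1 e2 in \<open>simp_all add: line_eq_def\<close>)
qed

lemma EQD:
  assumes l1: "line_eq a1 b1 c1 \<in> L" and l2: "line_eq a2 b2 c2 \<in> L"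
    and n1: "(a1,b1) \<noteq> (0,0)" and n2: "(a2,b2) \<noteq> (0,0)"
    and ne: "line_eq a1 b1 c1 \<noteq> line_eq a2 b2 c2" and n: "(A,B) \<noteq> (0,0)"
    and h: "\<And>x y. A*x + B*y = C \<Longrightarrow>
       \<bar>a1*x + b1*y - c1\<bar> / sqrt (a1^2+b1^2) = \<bar>a2*x + b2*y - c2\<bar> / sqrt (a2^2+b2^2)"
  shows "line_eq A B C \<in> L"
proof (rule eqd[OF l1 l2 ne])
  show "equidistant_line (line_eq a1 b1 c1) (line_eq a2 b2 c2) (line_eq A B C)"
    unfolding equidistant_line_def is_line_def
  proof (intro conjI ballI)
    show "\<exists>a b c. (a, b) \<noteq> (0, 0) \<and> line_eq A B C = line_eq a b c" using n by blast
  next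
    fix z assume "z \<in> line_eq A B C"
    then obtain x y where z: "z = (x,y)" and "A*x + B*y = C" unfolding line_eq_def by auto
    then show "infdist z (line_eq a1 b1 c1) = infdist z (line_eq a2 b2 c2)"
      using h infdist_line[OF n1] infdist_line[OF n2] by simp
  qed
qed

lemma Y: "line_eq 1 0 0 \<in> L"
  by (rule LT[OF O E]) auto

lemma H2: "line_eq 0 1 (1/2) \<in> L"
proof -
  have "line_eq 0 2 1 \<in> L" by (rule PB[OF O E]) auto
  moreover have "line_eq (2*0) (2*1) (2*(1/2)) = line_eq 0 1 (1/2)" by (rule line_eq_scale) simp
  ultimately show ?thesis by simp
qed

lemma hP: "(0,1/2) \<in> P"
  by (rule MEET[OF Y H2]) auto

lemma Q: "line_eq 0 1 (1/4) \<in> L"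
  by (rule PB[OF O hP]) (auto simp: power2_eq_square)

lemma D: "line_eq 1 1 (1/2) \<in> L"
proof (rule EQD[OF Y H2])
  have "(0,0) \<in> line_eq 1 0 0" "(0,0) \<notin> line_eq 0 1 (1/2)" by (auto simp: line_eq_def)
  then show "line_eq 1 0 0 \<noteq> line_eq 0 1 (1/2)" by blast
next
  fix x y :: real assume "1*x + 1*y = 1/2"
  then have "y - 1/2 = -x" by simp
  then show "\<bar>1*x + 0*y - 0\<bar> / sqrt (1^2+0^2) = \<bar>0*x + 1*y - 1/2\<bar> / sqrt (0^2+1^2)" by simp
qed auto

lemma q0: "(1/4,1/4) \<in> P"
  by (rule MEET[OF D Q]) auto

lemma twolines:
  assumes p: "p \<in> P"
  shows "\<exists>L1 L2. L1 \<in> L \<and> L2 \<in> L \<and> L1 \<noteq> L2 \<and> p \<in> L1 \<and> p \<in> L2"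
proof (cases "fst p = 0")
  case True
  have "p \<noteq> (1/4,1/4)" using True by auto
  then have l2: "line_through p (1/4,1/4) \<in> L" using through[OF p q0] by simp
  have "(1/4,1/4) \<in> line_through p (1/4,1/4)" unfolding line_through_def
    by (auto intro!: exI[of _ 1])
  moreover have "(1/4::real,1/4::real) \<notin> line_eq 1 0 0" by (simp add: line_eq_def)
  moreover have "p \<in> line_eq 1 0 0" using True by (cases p) (simp add: line_eq_def)
  moreover have "p \<in> line_through p (1/4,1/4)" unfolding line_through_def
    by (auto intro!: exI[of _ 0])
  ultimately show ?thesis using Y l2 by metis
next
  case False
  have pO: "p \<noteq> (0,0)" and pE: "p \<noteq> (0,1)" using False by auto
  have l1: "line_through p (0,0) \<in> L" using through[OF p O pO] .
  have l2: "line_through p (0,1) \<in> L" using through[OF p E pE] .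
  have inp: "p \<in> line_through p q" for q unfolding line_through_def
    by (auto intro!: exI[of _ 0])
  have "(0,1) \<notin> line_through p (0,0)"
  proof
    assume "(0,1) \<in> line_through p (0,0)"
    then obtain t where "(0::real,1::real) = ((1 - t) * fst p + t * 0, (1 - t) * snd p + t * 0)"
      unfolding line_through_def by auto
    then have a: "(1-t)* fst p = 0" and b: "(1-t)* snd p = 1" by auto
    from a False have "t = 1" by simp
    with b show False by simp
  qed
  moreover have "(0,1) \<in> line_through p (0,1)" unfolding line_through_def
    by (auto intro!: exI[of _ 1])
  ultimately show ?thesis using l1 l2 inp by metis
qed

lemma PR:
  assumes p: "p \<in> P" and M: "line_eq a b c \<in> L" and ab: "(a,b) \<noteq> (0,0)"
  shows "reflect_pt a b c p \<in> P"
proof -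
  obtain L1 L2 where l: "L1 \<in> L" "L2 \<in> L" "L1 \<noteq> L2" "p \<in> L1" "p \<in> L2"
    using twolines[OF p] by blast
  let ?R = "reflect_pt a b c"
  have inv: "?R ` (?R ` S) = S" for S
    using reflect_invol[OF ab] by (simp add: image_image)
  have "?R ` L1 \<noteq> ?R ` L2"
  proof
    assume "?R ` L1 = ?R ` L2"
    then have "?R ` (?R ` L1) = ?R ` (?R ` L2)" by simp
    then show False using inv l(3) by simp
  qed
  then show ?thesis using meet0[OF refl[OF M ab l(1)] refl[OF M ab l(2)]] l(4,5) by blast
qed

lemma mP: "(-1/2, 1/2) \<in> P"
proof -
  have "reflect_pt 1 1 (1/2) (0,1) \<in> P" by (rule PR[OF E D]) simp
  moreover have "reflect_pt 1 1 (1/2) (0,1) = (-1/2, 1/2)" by (simp add: reflect_pt_def)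
  ultimately show ?thesis by simp
qed

lemma nP: "(-1/2, 0) \<in> P"
proof -
  have "reflect_pt 0 1 (1/4) (-1/2,1/2) \<in> P" by (rule PR[OF mP Q]) simp
  moreover have "reflect_pt 0 1 (1/4) (-1/2,1/2) = (-1/2, 0)" by (simp add: reflect_pt_def)
  ultimately show ?thesis by simp
qed

lemma X: "line_eq 0 1 0 \<in> L"
  by (rule LT[OF O nP]) auto

lemma Diag: "line_eq 1 (-1) 0 \<in> L"
proof (rule EQD[OF X Y])
  have "(0,1) \<in> line_eq 1 0 0" "(0,1) \<notin> line_eq 0 1 0" by (auto simp: line_eq_def)
  then show "line_eq 0 1 0 \<noteq> line_eq 1 0 0" by blast
next
  fix x y :: real assume "1*x + (-1)*y = 0"
  then have "x = y" by simp
  then show "\<bar>0*x + 1*y - 0\<bar> / sqrt (0^2+1^2) = \<bar>1*x + 0*y - 0\<bar> / sqrt (1^2+0^2)" by simp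
qed auto

lemma swap: assumes "(x,y) \<in> P" shows "(y,x) \<in> P"
proof -
  have "reflect_pt 1 (-1) 0 (x,y) = (y,x)" by (simp add: reflect_pt_def field_simps)
  then show ?thesis using PR[OF assms Diag] by simp
qed

lemma up: "(a,0) \<in> P \<Longrightarrow> (a,1) \<in> P"
  using PR[OF _ H2, of "(a,0)"] by (simp add: reflect_pt_def)

lemma flip: "(x,y) \<in> P \<Longrightarrow> (x,-y) \<in> P"
  using PR[OF _ X, of "(x,y)"] by (simp add: reflect_pt_def)

lemma proj1: assumes "(x,y) \<in> P" shows "(x,0) \<in> P"
proof (cases "y = 0")
  case True then show ?thesis using assms by simp
next
  case False
  have "line_eq 1 0 x \<in> L" by (rule LT[OF assms flip[OF assms]]) (use False in auto)
  then show ?thesis by (rule MEET[OF _ X]) auto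
qed

lemma proj2: "(x,y) \<in> P \<Longrightarrow> (y,0) \<in> P"
  using proj1 swap by blast

lemma V: "(a,0) \<in> P \<Longrightarrow> line_eq 1 0 a \<in> L"
  by (rule LT[OF _ up]) auto

lemma refl2: "(a,0) \<in> P \<Longrightarrow> (b,0) \<in> P \<Longrightarrow> (2*a - b, 0) \<in> P"
  using PR[OF _ V, of "(b,0)" a] by (simp add: reflect_pt_def)

lemma mid: assumes a: "(a,0) \<in> P" and b: "(b,0) \<in> P" shows "((a+b)/2, 0) \<in> P"
proof (cases "a = b")
  case True then show ?thesis using a by simp
next
  case False
  have "line_eq (2*(b-a)) 0 (b^2 - a^2) \<in> L" by (rule PB[OF a b]) (use False in auto)
  moreover have "2*(b-a)*((a+b)/2) + 0*0 = b^2-a^2"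
  proof -
    have "2*(b-a)*((a+b)/2) = (b-a)*(a+b)" by simp
    also have "\<dots> = b^2-a^2" by (simp add: power2_eq_square algebra_simps)
    finally show ?thesis by simp
  qed
  ultimately show ?thesis by (intro MEET[OF _ X]) (use False in auto)
qed

lemma one: "(1,0) \<in> P" using swap[OF E] .

lemma neg: "(b,0) \<in> P \<Longrightarrow> (-b,0) \<in> P"
  using refl2[OF O, of b] by simp

lemma add: assumes "(a,0) \<in> P" "(b,0) \<in> P" shows "(a+b,0) \<in> P"
proof -
  have "(2*((a+b)/2) - 0, 0) \<in> P" using refl2[OF mid[OF assms] O] .
  moreover have "2*((a+b)/2) - 0 = a + b" by simp
  ultimately show ?thesis by metis
qed

lemma sub: "(a,0) \<in> P \<Longrightarrow> (b,0) \<in> P \<Longrightarrow> (a-b,0) \<in> P"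
  using add[OF _ neg, of a b] by simp

lemma mul: assumes a: "(a,0) \<in> P" and b: "(b,0) \<in> P" shows "(a*b,0) \<in> P"
proof -
  have p: "(1,a) \<in> P" using swap[OF up[OF a]] .
  have "line_eq a (-1) 0 \<in> L" by (rule LT[OF O p]) auto
  then have "(b, a*b) \<in> P" by (rule MEET[OF _ V[OF b]]) auto
  then show ?thesis by (rule proj2)
qed

lemma inv: assumes a: "(a,0) \<in> P" and a0: "a \<noteq> 0" shows "(inverse a,0) \<in> P"
proof -
  have p: "(a,1) \<in> P" using up[OF a] .
  have "line_eq 1 (-a) 0 \<in> L" by (rule LT[OF O p]) auto
  then have "(1, 1/a) \<in> P" by (rule MEET[OF _ V[OF one]]) (use a0 in auto)
  then show ?thesis using proj2 by (simp add: inverse_eq_divide)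
qed

lemma sqrt1: assumes a: "(a,0) \<in> P" shows "(sqrt (1 + a^2),0) \<in> P"
proof (cases "a = 0")
  case True then show ?thesis using one by simp
next
  case False
  define r where "r = sqrt (1 + a^2)"
  have r0: "r > 0" unfolding r_def by (simp add: add_pos_nonneg)
  have rr: "r^2 = 1 + a^2" unfolding r_def by (simp add: add_nonneg_nonneg)
  have p: "(1,a) \<in> P" using swap[OF up[OF a]] .
  have Lp: "line_eq a (-1) 0 \<in> L" by (rule LT[OF O p]) auto
  have M: "line_eq a (-(r+1)) 0 \<in> L"
  proof (rule EQD[OF X Lp])
    have "(1,a) \<in> line_eq a (-1) 0" "(1,a) \<notin> line_eq 0 1 0" using False by (auto simp: line_eq_def)
    then show "line_eq 0 1 0 \<noteq> line_eq a (-1) 0" by blast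
  next
    show "(a, -(r+1)) \<noteq> (0,0)" using r0 by auto
  next
    fix x y assume h: "a*x + (-(r+1))*y = 0"
    have s: "sqrt (a^2 + (-1)^2) = r" unfolding r_def by (simp add: add.commute)
    have "a*x + (-1)*y - 0 = r*y" using h by (simp add: algebra_simps)
    then have "\<bar>a*x + (-1)*y - 0\<bar> / sqrt (a^2 + (-1)^2) = \<bar>y\<bar>"
      unfolding s using r0 by (simp add: abs_mult)
    then show "\<bar>0*x + 1*y - 0\<bar> / sqrt (0^2 + 1^2) = \<bar>a*x + (-1)*y - 0\<bar> / sqrt (a^2 + (-1)^2)"
      by simp
  qed (use False in auto)
  have R: "reflect_pt a (-(r+1)) 0 (1,a) \<in> P" by (rule PR[OF p M]) (use r0 in auto)
  have den: "a^2 + (-(r+1))^2 = 2*r*(r+1)" using rr by (simp add: power2_eq_square algebra_simps)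
  have num: "a*1 + (-(r+1))*a - 0 = -(r*a)" by (simp add: algebra_simps)
  define t where "t = -(r*a) / (2*r*(r+1))"
  have t: "t = -a/(2*(r+1))"
  proof -
    have "t = (r * (-a)) / (r * (2*(r+1)))" unfolding t_def by (simp add: algebra_simps)
    also have "\<dots> = -a/(2*(r+1))" using r0 by (rule nonzero_mult_divide_mult_cancel_left[OF less_imp_neq[symmetric]])
    finally show ?thesis .
  qed
  have "reflect_pt a (-(r+1)) 0 (1,a) = (1 - 2*a*t, a - 2*(-(r+1))*t)"
    unfolding reflect_pt_def Let_def using den num t_def by simp
  also have "\<dots> = (r, 0)"
  proof -
    have "1 - 2*a*t = (r + 1 + a^2)/(r+1)" unfolding t using r0 by (simp add: field_simps power2_eq_square)
    also have "\<dots> = r*(r+1)/(r+1)" using rr by (simp add: power2_eq_square algebra_simps)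
    also have "\<dots> = r" using r0 by simp
    finally have 1: "1 - 2*a*t = r" .
    have r1: "r + 1 \<noteq> 0" using r0 by simp
    have "2*(-(r+1))*t = a" unfolding t using r1 by (simp add: field_simps)
    then have 2: "a - 2*(-(r+1))*t = 0" by simp
    show ?thesis using 1 2 by simp
  qed
  finally show ?thesis using R r_def by simp
qed

end



lemma lift0:
  assumes h: "\<And>P Ls. opair P Ls \<Longrightarrow> y \<in> P"
  shows "y \<in> origami_points"
  unfolding origami_points_def origami_closed_def
proof (intro InterI, clarify)
  fix P Ls assume "(0,0) \<in> P" "(0,1) \<in> P" "origami_pair P Ls"
  then have "opair P Ls" by unfold_locales
  then show "y \<in> P" by (rule h)
qed

lemma P0D: "x \<in> origami_points \<Longrightarrow> opair P Ls \<Longrightarrow> x \<in> P"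
  unfolding origami_points_def origami_closed_def opair_def by blast

lemma K_neg: assumes "(a,0) \<in> origami_points" shows "(-a,0) \<in> origami_points"
proof (rule lift0)
  fix P Ls assume o: "opair P Ls"
  show "(-a,0) \<in> P" using opair.neg[OF o P0D[OF assms(1) o]] .
qed
lemma K_add: assumes "(a,0) \<in> origami_points" "(b,0) \<in> origami_points" shows "(a+b,0) \<in> origami_points"
proof (rule lift0)
  fix P Ls assume o: "opair P Ls"
  show "(a+b,0) \<in> P" using opair.add[OF o P0D[OF assms(1) o] P0D[OF assms(2) o]] .
qed
lemma K_sub: assumes "(a,0) \<in> origami_points" "(b,0) \<in> origami_points" shows "(a-b,0) \<in> origami_points"
proof (rule lift0)
  fix P Ls assume o: "opair P Ls"
  show "(a-b,0) \<in> P" using opair.sub[OF o P0D[OF assms(1) o] P0D[OF assms(2) o]] .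
qed
lemma K_mul: assumes "(a,0) \<in> origami_points" "(b,0) \<in> origami_points" shows "(a*b,0) \<in> origami_points"
proof (rule lift0)
  fix P Ls assume o: "opair P Ls"
  show "(a*b,0) \<in> P" using opair.mul[OF o P0D[OF assms(1) o] P0D[OF assms(2) o]] .
qed
lemma K_inv: assumes "(a,0) \<in> origami_points" "a \<noteq> 0" shows "(inverse a,0) \<in> origami_points"
proof (rule lift0)
  fix P Ls assume o: "opair P Ls"
  show "(inverse a,0) \<in> P" using opair.inv[OF o P0D[OF assms(1) o] assms(2)] .
qed
lemma K_sqrt: assumes "(a,0) \<in> origami_points" shows "(sqrt (1 + a^2),0) \<in> origami_points"
proof (rule lift0)
  fix P Ls assume o: "opair P Ls"
  show "(sqrt (1 + a^2),0) \<in> P" using opair.sqrt1[OF o P0D[OF assms(1) o]] .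
qed
lemma K_0: shows "(0,0) \<in> origami_points"
proof (rule lift0)
  fix P Ls assume o: "opair P Ls"
  show "(0,0) \<in> P" using opair.O[OF o] .
qed
lemma K_1: shows "(1,0) \<in> origami_points"
proof (rule lift0)
  fix P Ls assume o: "opair P Ls"
  show "(1,0) \<in> P" using opair.one[OF o] .
qed
lemma K_proj1: assumes "(x,y) \<in> origami_points" shows "(x,0) \<in> origami_points"
proof (rule lift0)
  fix P Ls assume o: "opair P Ls"
  show "(x,0) \<in> P" using opair.proj1[OF o P0D[OF assms(1) o]] .
qed
lemma K_proj2: assumes "(x,y) \<in> origami_points" shows "(y,0) \<in> origami_points"
proof (rule lift0)
  fix P Ls assume o: "opair P Ls"
  show "(y,0) \<in> P" using opair.proj2[OF o P0D[OF assms(1) o]] .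
qed

lemma K_abs: "(a,0) \<in> origami_points \<Longrightarrow> (\<bar>a\<bar>,0) \<in> origami_points"
  by (cases "a \<ge> 0") (auto intro: K_neg)

lemma K_unabs: "(\<bar>a\<bar>,0) \<in> origami_points \<Longrightarrow> (a,0) \<in> origami_points"
  by (cases "a \<ge> 0") (auto dest: K_neg)

lemma char: "\<alpha> \<in> origami_numbers \<longleftrightarrow> (\<alpha>,0) \<in> origami_points"
proof
  assume "(\<alpha>,0) \<in> origami_points"
  moreover have "\<bar>\<alpha>\<bar> = dist (\<alpha>,0) (0::real,0::real)" by (simp add: dist_pt)
  ultimately show "\<alpha> \<in> origami_numbers" unfolding origami_numbers_def using K_0 by blast
next
  assume "\<alpha> \<in> origami_numbers"
  then obtain x1 y1 x2 y2 where v1: "(x1,y1) \<in> origami_points" and v2: "(x2,y2) \<in> origami_points"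
    and d: "\<bar>\<alpha>\<bar> = dist (x1,y1) (x2,y2)" unfolding origami_numbers_def by auto
  define dx where "dx = x1 - x2"
  define dy where "dy = y1 - y2"
  have kx: "(dx,0) \<in> origami_points" unfolding dx_def by (intro K_sub K_proj1[OF v1] K_proj1[OF v2])
  have ky: "(dy,0) \<in> origami_points" unfolding dy_def by (intro K_sub K_proj2[OF v1] K_proj2[OF v2])
  have d2: "\<bar>\<alpha>\<bar> = sqrt (dx^2 + dy^2)" using d unfolding dx_def dy_def by (simp add: dist_pt)
  have "(\<bar>\<alpha>\<bar>,0) \<in> origami_points"
  proof (cases "dx = 0")
    case True
    then have "\<bar>\<alpha>\<bar> = \<bar>dy\<bar>" using d2 by simp
    then show ?thesis using K_abs[OF ky] by simp
  next
    case False
    have "dx^2 + dy^2 = dx^2 * (1 + (dy * inverse dx)^2)" using False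
      by (simp add: field_simps power2_eq_square)
    then have "sqrt (dx^2 + dy^2) = \<bar>dx\<bar> * sqrt (1 + (dy * inverse dx)^2)"
      by (simp add: real_sqrt_mult)
    moreover have "(\<bar>dx\<bar> * sqrt (1 + (dy * inverse dx)^2), 0) \<in> origami_points"
      by (intro K_mul K_abs[OF kx] K_sqrt K_mul[OF ky] K_inv[OF kx False])
    ultimately show ?thesis using d2 by simp
  qed
  then show "(\<alpha>,0) \<in> origami_points" by (rule K_unabs)
qed

theorem mainTheorem3:
  shows "real_subfield origami_numbers \<and>
         (\<forall>\<alpha>\<in>origami_numbers. sqrt (1 + \<alpha>\<^sup>2) \<in> origami_numbers)"
  unfolding real_subfield_def
proof (intro conjI ballI impI)
  show "0 \<in> origami_numbers" using K_0 char by blast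
  show "1 \<in> origami_numbers" using K_1 char by blast
next
  fix x y assume "x \<in> origami_numbers" "y \<in> origami_numbers"
  then have x: "(x,0) \<in> origami_points" and y: "(y,0) \<in> origami_points" using char by blast+
  show "x+y \<in> origami_numbers" using K_add[OF x y] char by blast
  show "x-y \<in> origami_numbers" using K_sub[OF x y] char by blast
  show "x*y \<in> origami_numbers" using K_mul[OF x y] char by blast
next
  fix x assume "x \<in> origami_numbers"
  then have x: "(x,0) \<in> origami_points" using char by blast
  show "x \<noteq> 0 \<Longrightarrow> inverse x \<in> origami_numbers" using K_inv[OF x] char by blast
  show "sqrt (1 + x\<^sup>2) \<in> origami_numbers" using K_sqrt[OF x] char by blast
qed

end
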